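(* Let $R$ be a commutative Noetherian ring with unity such that the number of vertices of $\Gamma_E(R)$ is finite and greater than $2$. Then for any vertex $[y]$ of maximal degree in $\Gamma_E(R)$, $\operatorname{ann}(y)$ is a maximal element of $\mathfrak F=\{\operatorname{ann}(z)\mid 0\neq z\in R\}$, and hence is an associated prime of $R$.
   Context: For $x,y\in R$ write $x\sim y$ iff $\operatorname{ann}(x)=\operatorname{ann}(y)$; $[x]$ denotes the equivalence class of $x$. Let $Z^*(R)$ be the set of nonzero zero divisors of $R$. The graph $\Gamma_E(R)$ is the simple graph whose vertices are the classes $[x]$ with $x\in Z^*(R)$, two distinct vertices $[x],[y]$ being adjacent iff $xy=0$. The degree of a vertex is the number of vertices adjacent to it. An associated prime of $R$ is a prime ideal of the form $\operatorname{ann}(y)$, $y\in R$. *)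

theory Defs
  imports "HOL-Algebra.Algebra"
begin

definition ann :: "('a, 'b) ring_scheme \<Rightarrow> 'a \<Rightarrow> 'a set" where
  "ann R x = {r \<in> carrier R. r \<otimes>\<^bsub>R\<^esub> x = \<zero>\<^bsub>R\<^esub>}"

definition zdiv_star :: "('a, 'b) ring_scheme \<Rightarrow> 'a set" where
  "zdiv_star R = {x \<in> carrier R. x \<noteq> \<zero>\<^bsub>R\<^esub> \<and>
      (\<exists>y \<in> carrier R. y \<noteq> \<zero>\<^bsub>R\<^esub> \<and> x \<otimes>\<^bsub>R\<^esub> y = \<zero>\<^bsub>R\<^esub>)}"

definition cls :: "('a, 'b) ring_scheme \<Rightarrow> 'a \<Rightarrow> 'a set" where
  "cls R x = {y \<in> carrier R. ann R y = ann R x}"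

definition GE_vertices :: "('a, 'b) ring_scheme \<Rightarrow> 'a set set" where
  "GE_vertices R = cls R ` zdiv_star R"

definition GE_adj :: "('a, 'b) ring_scheme \<Rightarrow> 'a set \<Rightarrow> 'a set \<Rightarrow> bool" where
  "GE_adj R u v \<longleftrightarrow> u \<in> GE_vertices R \<and> v \<in> GE_vertices R \<and> u \<noteq> v \<and>
      (\<exists>x \<in> u. \<exists>y \<in> v. x \<otimes>\<^bsub>R\<^esub> y = \<zero>\<^bsub>R\<^esub>)"

definition GE_degree :: "('a, 'b) ring_scheme \<Rightarrow> 'a set \<Rightarrow> nat" where
  "GE_degree R v = card {u \<in> GE_vertices R. GE_adj R v u}"

definition ann_family :: "('a, 'b) ring_scheme \<Rightarrow> 'a set set" where
  "ann_family R = {ann R z | z. z \<in> carrier R \<and> z \<noteq> \<zero>\<^bsub>R\<^esub>}"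

definition associated_prime :: "('a, 'b) ring_scheme \<Rightarrow> 'a set \<Rightarrow> bool" where
  "associated_prime R P \<longleftrightarrow> primeideal P R \<and> (\<exists>y \<in> carrier R. P = ann R y)"

end

theory Submission
  imports Defs
begin
context cring begin
lemma ann_iff: "r \<in> ann R x \<longleftrightarrow> r \<in> carrier R \<and> r \<otimes> x = \<zero>"
  by (simp add: ann_def)

lemma ann_ideal: assumes "x \<in> carrier R" shows "ideal (ann R x) R"
proof (rule idealI[OF ring_axioms])
  show "subgroup (ann R x) (add_monoid R)"
    apply (rule add.subgroupI)
    using assms by (auto simp: ann_def l_distr l_minus)
next
  fix a y assume "a \<in> ann R x" "y \<in> carrier R"
  then show "y \<otimes> a \<in> ann R x" using assms by (auto simp: ann_def m_assoc)
next
  fix a y assume a: "a \<in> ann R x" and y: "y \<in> carrier R"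
  then have ac: "a \<in> carrier R" "a \<otimes> x = \<zero>" by (auto simp: ann_def)
  have "a \<otimes> y \<otimes> x = a \<otimes> (y \<otimes> x)" using ac y assms by (simp add: m_assoc)
  also have "\<dots> = a \<otimes> (x \<otimes> y)" using y assms by (simp add: m_comm[of y x])
  also have "\<dots> = a \<otimes> x \<otimes> y" using ac(1) y assms by (simp only: m_assoc)
  also have "\<dots> = \<zero>" using ac y by simp
  finally show "a \<otimes> y \<in> ann R x" using ac y by (simp add: ann_def)
qed

lemma cls_self: "x \<in> carrier R \<Longrightarrow> x \<in> cls R x"
  by (simp add: cls_def)

lemma cls_eq: "a \<in> carrier R \<Longrightarrow> b \<in> carrier R \<Longrightarrow> cls R a = cls R b \<longleftrightarrow> ann R a = ann R b"
  unfolding cls_def by auto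

lemma zds_iff: "x \<in> zdiv_star R \<longleftrightarrow> x \<in> carrier R \<and> x \<noteq> \<zero> \<and> (\<exists>t\<in>carrier R. t \<noteq> \<zero> \<and> t \<otimes> x = \<zero>)"
  unfolding zdiv_star_def using m_comm by auto

lemma adj_iff:
  assumes a: "a \<in> zdiv_star R" and b: "b \<in> zdiv_star R"
  shows "GE_adj R (cls R a) (cls R b) \<longleftrightarrow> ann R a \<noteq> ann R b \<and> a \<otimes> b = \<zero>"
proof -
  have ac: "a \<in> carrier R" and bc: "b \<in> carrier R" using a b by (auto simp: zdiv_star_def)
  have va: "cls R a \<in> GE_vertices R" and vb: "cls R b \<in> GE_vertices R"
    using a b by (auto simp: GE_vertices_def)
  show ?thesis
  proof
    assume "GE_adj R (cls R a) (cls R b)"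
    then obtain x y where x: "x \<in> cls R a" and y: "y \<in> cls R b" and xy: "x \<otimes> y = \<zero>"
      and ne: "cls R a \<noteq> cls R b"
      by (auto simp: GE_adj_def)
    have xc: "x \<in> carrier R" and yc: "y \<in> carrier R" and ax: "ann R x = ann R a" and ay: "ann R y = ann R b"
      using x y by (auto simp: cls_def)
    have "x \<in> ann R b" using xy xc ay by (auto simp: ann_def)
    then have "x \<otimes> b = \<zero>" by (simp add: ann_def)
    then have "b \<in> ann R a" using ax bc xc m_comm by (auto simp: ann_def)
    then have "b \<otimes> a = \<zero>" by (simp add: ann_def)
    then show "ann R a \<noteq> ann R b \<and> a \<otimes> b = \<zero>"
      using ne cls_eq[OF ac bc] m_comm[OF ac bc] by simp
  next
    assume "ann R a \<noteq> ann R b \<and> a \<otimes> b = \<zero>"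
    then show "GE_adj R (cls R a) (cls R b)"
      unfolding GE_adj_def using va vb cls_eq[OF ac bc] cls_self[OF ac] cls_self[OF bc] by blast
  qed
qed

lemma deg_less:
  assumes fin: "finite (GE_vertices R)" and y: "y \<in> zdiv_star R" and w: "w \<in> zdiv_star R"
    and sub: "ann R y \<subseteq> ann R w" "ann R y \<noteq> ann R w"
    and x: "x \<in> ann R w" "x \<otimes> y \<noteq> \<zero>" "ann R x \<noteq> ann R w" "ann R x \<noteq> ann R y"
  shows "GE_degree R (cls R y) < GE_degree R (cls R w)"
proof -
  define V where "V = GE_vertices R"
  define Ny where "Ny = {u \<in> V. GE_adj R (cls R y) u}"
  define Nw where "Nw = {u \<in> V. GE_adj R (cls R w) u}"
  define f where "f u = (if u = cls R w then cls R y else u)" for u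
  have yc: "y \<in> carrier R" and wc: "w \<in> carrier R" using y w by (auto simp: zdiv_star_def)
  have xc: "x \<in> carrier R" and xw: "x \<otimes> w = \<zero>" using x by (auto simp: ann_def)
  have xz: "x \<in> zdiv_star R"
    using xc xw x(2) w yc by (auto simp: zds_iff m_comm)
  have vy: "cls R y \<in> V" and vx: "cls R x \<in> V" using y xz by (auto simp: V_def GE_vertices_def)
  have img: "f ` Ny \<subseteq> Nw - {cls R x}"
  proof
    fix v assume "v \<in> f ` Ny"
    then obtain u where u: "u \<in> Ny" and v: "v = f u" by auto
    then obtain z where z: "z \<in> zdiv_star R" "u = cls R z" by (auto simp: Ny_def V_def GE_vertices_def)
    have zc: "z \<in> carrier R" using z by (auto simp: zdiv_star_def)
    have adj: "ann R y \<noteq> ann R z" "y \<otimes> z = \<zero>" using u z adj_iff[OF y z(1)] by (auto simp: Ny_def)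
    show "v \<in> Nw - {cls R x}"
    proof (cases "u = cls R w")
      case True
      then have "ann R z = ann R w" using z cls_eq zc wc by auto
      moreover have "y \<in> ann R z" using adj yc by (simp add: ann_def)
      ultimately have "y \<otimes> w = \<zero>" by (simp add: ann_def)
      then have "GE_adj R (cls R w) (cls R y)" using adj_iff[OF w y] sub m_comm[OF yc wc] by simp
      moreover have "cls R y \<noteq> cls R x" using cls_eq[OF yc xc] x by auto
      ultimately show ?thesis using True v vy by (simp add: f_def Nw_def)
    next
      case False
      have zy: "z \<otimes> y = \<zero>" using adj m_comm[OF yc zc] by simp
      then have "z \<in> ann R w" using sub zc by (auto simp: ann_def)
      then have "w \<otimes> z = \<zero>" using m_comm[OF wc zc] by (simp add: ann_def)
      moreover have "ann R w \<noteq> ann R z" using False z cls_eq[OF zc wc] by auto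
      ultimately have "GE_adj R (cls R w) (cls R z)" using adj_iff[OF w z(1)] by simp
      moreover have "cls R z \<noteq> cls R x"
      proof
        assume "cls R z = cls R x"
        then have "ann R z = ann R x" using cls_eq[OF zc xc] by simp
        moreover have "y \<in> ann R z" using adj yc by (simp add: ann_def)
        ultimately show False using x(2) m_comm[OF yc xc] by (simp add: ann_def)
      qed
      ultimately show ?thesis using False v z u by (simp add: f_def Nw_def Ny_def)
    qed
  qed
  have inj: "inj_on f Ny"
  proof (rule inj_onI)
    fix u v assume u: "u \<in> Ny" and v: "v \<in> Ny" and e: "f u = f v"
    have nyy: "cls R y \<notin> Ny" by (auto simp: Ny_def GE_adj_def)
    show "u = v"
    proof (rule ccontr)
      assume "u \<noteq> v"
      then have "u = cls R w \<and> v = cls R y \<or> v = cls R w \<and> u = cls R y"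
        using e by (auto simp: f_def split: if_splits)
      then show False using u v nyy by auto
    qed
  qed
  have finNw: "finite Nw" using fin by (simp add: Nw_def V_def)
  have xN: "cls R x \<in> Nw"
    using adj_iff[OF w xz] x xw m_comm[OF xc wc] vx by (simp add: Nw_def)
  have "card Ny = card (f ` Ny)" using card_image[OF inj] by simp
  also have "\<dots> \<le> card (Nw - {cls R x})" using card_mono[OF _ img] finNw by simp
  also have "\<dots> < card Nw" using finNw xN by (rule card_Diff1_less)
  finally show ?thesis by (simp add: GE_degree_def Ny_def Nw_def V_def)
qed

lemma max_prime:
  assumes wc: "w \<in> carrier R" and w0: "w \<noteq> \<zero>"
    and maxP: "\<forall>I \<in> ann_family R. ann R w \<subseteq> I \<longrightarrow> I = ann R w"
  shows "primeideal (ann R w) R"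
proof (rule primeidealI[OF ann_ideal[OF wc] is_cring])
  show "carrier R \<noteq> ann R w"
  proof
    assume "carrier R = ann R w"
    then have "\<one> \<in> ann R w" by (metis one_closed)
    then show False using w0 wc by (simp add: ann_def)
  qed
next
  fix a b assume a: "a \<in> carrier R" and b: "b \<in> carrier R" and ab: "a \<otimes> b \<in> ann R w"
  show "a \<in> ann R w \<or> b \<in> ann R w"
  proof (cases "b \<in> ann R w")
    case False
    then have bw: "b \<otimes> w \<noteq> \<zero>" using b by (simp add: ann_def)
    have bwc: "b \<otimes> w \<in> carrier R" using b wc by simp
    have "ann R w \<subseteq> ann R (b \<otimes> w)"
    proof
      fix r assume "r \<in> ann R w"
      then have r: "r \<in> carrier R" "r \<otimes> w = \<zero>" by (auto simp: ann_def)
      have "r \<otimes> (b \<otimes> w) = b \<otimes> (r \<otimes> w)" using r b wc by (metis m_assoc m_comm)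
      then show "r \<in> ann R (b \<otimes> w)" using r b by (simp add: ann_def)
    qed
    moreover have "ann R (b \<otimes> w) \<in> ann_family R" using bw bwc by (auto simp: ann_family_def)
    ultimately have eq: "ann R (b \<otimes> w) = ann R w" using maxP by blast
    have "a \<otimes> (b \<otimes> w) = a \<otimes> b \<otimes> w" using a b wc by (simp only: m_assoc)
    also have "\<dots> = \<zero>" using ab by (simp add: ann_def)
    finally have "a \<in> ann R (b \<otimes> w)" using a by (simp add: ann_def)
    then show ?thesis using eq by simp
  qed simp
qed

lemma fin_family:
  assumes fin: "finite (GE_vertices R)"
  shows "finite (ann_family R)"
proof -
  have "ann_family R \<subseteq> insert {\<zero>} ((\<lambda>u. ann R (SOME t. t \<in> u)) ` GE_vertices R)"
  proof
    fix I assume "I \<in> ann_family R"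
    then obtain z where z: "z \<in> carrier R" "z \<noteq> \<zero>" "I = ann R z" by (auto simp: ann_family_def)
    show "I \<in> insert {\<zero>} ((\<lambda>u. ann R (SOME t. t \<in> u)) ` GE_vertices R)"
    proof (cases "z \<in> zdiv_star R")
      case True
      then have v: "cls R z \<in> GE_vertices R" by (simp add: GE_vertices_def)
      have "(SOME t. t \<in> cls R z) \<in> cls R z" using cls_self[OF z(1)] by (rule someI)
      then have "ann R (SOME t. t \<in> cls R z) = ann R z" by (simp add: cls_def)
      then show ?thesis using v z by force
    next
      case False
      then have "ann R z = {\<zero>}" using z by (auto simp: zds_iff ann_def)
      then show ?thesis using z by simp
    qed
  qed
  then show ?thesis by (rule finite_subset) (simp add: fin)
qed

lemma extra_exists:
  assumes y: "y \<in> zdiv_star R" and wc: "w \<in> carrier R" and w0: "w \<noteq> \<zero>"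
    and sub: "ann R y \<subseteq> ann R w" "ann R y \<noteq> ann R w"
    and maxP: "\<forall>I \<in> ann_family R. ann R w \<subseteq> I \<longrightarrow> I = ann R w"
    and pr: "primeideal (ann R w) R"
    and fin: "finite (GE_vertices R)" and card: "card (GE_vertices R) > 2"
  shows "\<exists>x \<in> ann R w. x \<otimes> y \<noteq> \<zero> \<and> ann R x \<noteq> ann R w \<and> ann R x \<noteq> ann R y"
proof (rule ccontr)
  assume "\<not> ?thesis"
  then have H: "\<And>x. x \<in> ann R w \<Longrightarrow> x \<otimes> y \<noteq> \<zero> \<Longrightarrow> ann R x = ann R w \<or> ann R x = ann R y"
    by blast
  let ?P = "ann R w" and ?A = "ann R y"
  have yc: "y \<in> carrier R" using y by (simp add: zdiv_star_def)
  have IP: "additive_subgroup ?P R" using ideal.axioms(1)[OF ann_ideal[OF wc]] .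
  have IA: "additive_subgroup ?A R" using ideal.axioms(1)[OF ann_ideal[OF yc]] .
  have Pc: "?P \<subseteq> carrier R" by (auto simp: ann_def)
  obtain a where a: "a \<in> ?P" "a \<notin> ?A" using sub by blast
  have ac: "a \<in> carrier R" using a Pc by auto
  have S1: "ann R b = ?P" if b: "b \<in> ?A" "b \<noteq> \<zero>" for b
  proof -
    have bc: "b \<in> carrier R" using b by (simp add: ann_def)
    have "?P \<subseteq> ann R b"
    proof
      fix p assume p: "p \<in> ?P"
      have pc: "p \<in> carrier R" using p Pc by auto
      have gen: "b \<otimes> q = \<zero>" if q: "q \<in> ?P" "q \<notin> ?A" for q
      proof -
        have qc: "q \<in> carrier R" using q Pc by auto
        have "q \<otimes> y \<noteq> \<zero>" using q qc by (simp add: ann_def)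
        then have "ann R q = ?P \<or> ann R q = ?A" using H q by blast
        then have "b \<in> ann R q" using b sub by auto
        then show ?thesis by (simp add: ann_def)
      qed
      have "b \<otimes> p = \<zero>"
      proof (cases "p \<in> ?A")
        case False
        then show ?thesis using gen p by blast
      next
        case True
        have ap: "a \<oplus> p \<in> ?P" using additive_subgroup.a_closed[OF IP a(1) p] .
        have "a \<oplus> p \<notin> ?A"
        proof
          assume "a \<oplus> p \<in> ?A"
          have "a \<oplus> p \<oplus> (\<ominus> p) \<in> ?A"
            using additive_subgroup.a_closed[OF IA \<open>a \<oplus> p \<in> ?A\<close> additive_subgroup.a_inv_closed[OF IA True]] .
          moreover have "a \<oplus> p \<oplus> (\<ominus> p) = a" using ac pc by (simp add: a_assoc r_neg)
          ultimately show False using a by simp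
        qed
        then have "b \<otimes> (a \<oplus> p) = \<zero>" using gen ap by blast
        then have "b \<otimes> a \<oplus> b \<otimes> p = \<zero>" using bc ac pc by (simp add: r_distr)
        moreover have "b \<otimes> a = \<zero>" using gen a by blast
        ultimately show ?thesis using bc pc by simp
      qed
      then show "p \<in> ann R b" using pc bc m_comm[OF bc pc] by (simp add: ann_def)
    qed
    moreover have "ann R b \<in> ann_family R" using bc b by (auto simp: ann_family_def)
    ultimately show ?thesis using maxP by blast
  qed
  have G: "ann R c = ?P \<or> ann R c = ?A" if c: "c \<in> ?P" "c \<noteq> \<zero>" for c
  proof (cases "c \<otimes> y = \<zero>")
    case True
    then have "c \<in> ?A" using c Pc by (auto simp: ann_def)
    then show ?thesis using S1 c by blast
  qed (use H c in blast)
  have "GE_vertices R \<subseteq> {cls R w, cls R y}"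
  proof
    fix u assume "u \<in> GE_vertices R"
    then obtain v where v: "v \<in> zdiv_star R" "u = cls R v" by (auto simp: GE_vertices_def)
    have vc: "v \<in> carrier R" "v \<noteq> \<zero>" using v by (auto simp: zdiv_star_def)
    have "ann R v = ?P \<or> ann R v = ?A"
    proof (cases "v \<in> ?P")
      case True then show ?thesis using G vc by blast
    next
      case False
      obtain t where t: "t \<in> carrier R" "t \<noteq> \<zero>" "t \<otimes> v = \<zero>" using v by (auto simp: zds_iff)
      have "t \<otimes> v \<in> ?P" using t additive_subgroup.zero_closed[OF IP] by simp
      then have "t \<in> ?P" using primeideal.I_prime[OF pr t(1) vc(1)] False by blast
      then have "ann R t = ?P \<or> ann R t = ?A" using G t by blast
      then have "ann R t \<subseteq> ?P" using sub by auto
      moreover have "v \<in> ann R t" using t vc m_comm[OF vc(1) t(1)] by (simp add: ann_def)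
      ultimately show ?thesis using False by blast
    qed
    then show "u \<in> {cls R w, cls R y}" using v cls_eq[OF vc(1) wc] cls_eq[OF vc(1) yc] by auto
  qed
  then have "card (GE_vertices R) \<le> card {cls R w, cls R y}" by (rule card_mono[rotated]) simp
  also have "\<dots> \<le> 2" by (simp add: card_insert_if)
  finally show False using card by simp
qed

end

lemma (in cring) main_lemma:
  assumes "finite (GE_vertices R)" and "card (GE_vertices R) > 2"
    and "y \<in> carrier R" and "cls R y \<in> GE_vertices R"
    and "\<forall>v \<in> GE_vertices R. GE_degree R v \<le> GE_degree R (cls R y)"
  shows "ann R y \<in> ann_family R
    \<and> (\<forall>I \<in> ann_family R. ann R y \<subseteq> I \<longrightarrow> I = ann R y)
    \<and> associated_prime R (ann R y)"
proof -
  note fin = assms(1) and card = assms(2) and yc = assms(3) and maxdeg = assms(5)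
  obtain z where z: "z \<in> zdiv_star R" "cls R y = cls R z"
    using assms(4) by (auto simp: GE_vertices_def)
  have zc: "z \<in> carrier R" using z by (simp add: zdiv_star_def)
  have annyz: "ann R y = ann R z" using z cls_eq[OF yc zc] by simp
  have y0: "y \<noteq> \<zero>"
  proof
    assume "y = \<zero>"
    then have "\<one> \<in> ann R y" by (simp add: ann_def)
    then have "\<one> \<in> ann R z" using annyz by simp
    then show False using z zc by (simp add: ann_def zdiv_star_def)
  qed
  have ystar: "y \<in> zdiv_star R"
  proof -
    obtain t where t: "t \<in> carrier R" "t \<noteq> \<zero>" "t \<otimes> z = \<zero>" using z by (auto simp: zds_iff)
    then have "t \<otimes> y = \<zero>" using annyz by (auto simp: ann_def)
    then show ?thesis using t yc y0 by (auto simp: zds_iff)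
  qed
  have P1: "ann R y \<in> ann_family R" using yc y0 by (auto simp: ann_family_def)
  have P2: "\<forall>I \<in> ann_family R. ann R y \<subseteq> I \<longrightarrow> I = ann R y"
  proof (intro ballI impI, rule ccontr)
    fix J assume J: "J \<in> ann_family R" "ann R y \<subseteq> J" "J \<noteq> ann R y"
    define F2 where "F2 = {I \<in> ann_family R. J \<subseteq> I}"
    have "finite F2" using fin_family[OF fin] by (simp add: F2_def)
    moreover have "J \<in> F2" using J by (simp add: F2_def)
    ultimately obtain P where P: "P \<in> F2" "J \<subseteq> P" "\<forall>K \<in> F2. P \<subseteq> K \<longrightarrow> P = K"
      using finite_has_maximal2 by blast
    obtain w where w: "w \<in> carrier R" "w \<noteq> \<zero>" "P = ann R w"
      using P(1) by (auto simp: F2_def ann_family_def)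
    have maxP: "\<forall>I \<in> ann_family R. ann R w \<subseteq> I \<longrightarrow> I = ann R w"
      using P w by (auto simp: F2_def)
    have pr: "primeideal (ann R w) R" using max_prime[OF w(1) w(2) maxP] .
    have sub: "ann R y \<subseteq> ann R w" "ann R y \<noteq> ann R w" using J P w by auto
    have wstar: "w \<in> zdiv_star R"
    proof -
      obtain t where t: "t \<in> carrier R" "t \<noteq> \<zero>" "t \<otimes> y = \<zero>" using ystar by (auto simp: zds_iff)
      then have "t \<in> ann R w" using sub by (auto simp: ann_def)
      then show ?thesis using t w by (auto simp: zds_iff ann_def)
    qed
    obtain x where x: "x \<in> ann R w" "x \<otimes> y \<noteq> \<zero>" "ann R x \<noteq> ann R w" "ann R x \<noteq> ann R y"
      using extra_exists[OF ystar w(1) w(2) sub maxP pr fin card] by blast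
    have "GE_degree R (cls R y) < GE_degree R (cls R w)"
      using deg_less[OF fin ystar wstar sub x] .
    moreover have "cls R w \<in> GE_vertices R" using wstar by (simp add: GE_vertices_def)
    ultimately show False using maxdeg by fastforce
  qed
  have "primeideal (ann R y) R" using max_prime[OF yc y0 P2] .
  then have P3: "associated_prime R (ann R y)" using yc by (auto simp: associated_prime_def)
  show ?thesis using P1 P2 P3 by blast
qed

theorem theorem3p6:
  fixes R :: "('a, 'b) ring_scheme" and y :: 'a
  assumes "cring R" and "noetherian_ring R"
    and "finite (GE_vertices R)" and "card (GE_vertices R) > 2"
    and "y \<in> carrier R" and "cls R y \<in> GE_vertices R"
    and "\<forall>v \<in> GE_vertices R. GE_degree R v \<le> GE_degree R (cls R y)"
  shows "ann R y \<in> ann_family R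
    \<and> (\<forall>I \<in> ann_family R. ann R y \<subseteq> I \<longrightarrow> I = ann R y)
    \<and> associated_prime R (ann R y)"
  using cring.main_lemma[OF assms(1) assms(3-7)] .

end
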